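(* If $H=(\alpha,\beta)$ is a semi-norming $k$-hypergraph pair over $V$, then $\alpha(\omega)+\beta(\omega)\ge1$ for every $\omega\in{\rm supp}(\alpha)\cup{\rm supp}(\beta)$.
   Context: A $k$-hypergraph pair $H=(\alpha,\beta)$ consists of finite nonempty sets $V_1,\dots,V_k$ and functions $\alpha,\beta:V\to\mathbb{R}$, where $V=V_1\times\cdots\times V_k$; its size is $|H|=\sum_{\omega\in V}(|\alpha(\omega)|+|\beta(\omega)|)$. All measures are positive. For a measure space $\mathcal M=(\Omega,\mathcal F,\mu)$, the space $\Omega^{V_1}\times\cdots\times\Omega^{V_k}$ (points $x=(x_{i,v})_{i\in[k],v\in V_i}$) carries the product measure, and each $\omega=(\omega_1,\dots,\omega_k)\in V$ defines the projection $\omega(x)=(x_{1,\omega_1},\dots,x_{k,\omega_k})\in\Omega^k$. For measurable $f:\Omega^k\to\mathbb C$, $f^H(x)=\prod_{\omega\in V} f(\omega(x))^{\alpha(\omega)}\,\overline{f(\omega(x))^{\beta(\omega)}}$, with the convention $0^0=1$ (non-integer complex powers taken with a fixed branch). When $\alpha,\beta\ge 0$, set $\|f\|_H=(\int f^H)^{1/|H|}$, and let $L_H(\mathcal M)$ be the set of measurable $f$ with $\|\,|f|\,\|_H<\infty$. $H$ (with $\alpha,\beta\ge0$) is called norming (resp. semi-norming) if $\|\cdot\|_H$ is a norm (resp. semi-norm) on $L_H(\mathcal M)$ for every measure space $\mathcal M$. *)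

theory Defs
  imports "HOL-Probability.Probability"
begin

definition hpow :: "complex \<Rightarrow> real \<Rightarrow> complex" where
  "hpow z a = (if a = 0 then 1 else z powr (complex_of_real a))"

text \<open>V = V_1 x ... x V_k, indices 0..k-1, elements are functions on {..<k}.\<close>
definition hvert :: "nat \<Rightarrow> (nat \<Rightarrow> 'v set) \<Rightarrow> (nat \<Rightarrow> 'v) set" where
  "hvert k Vs = PiE {..<k} Vs"

definition hsize :: "nat \<Rightarrow> (nat \<Rightarrow> 'v set) \<Rightarrow> ((nat \<Rightarrow> 'v) \<Rightarrow> real)
    \<Rightarrow> ((nat \<Rightarrow> 'v) \<Rightarrow> real) \<Rightarrow> real" where
  "hsize k Vs \<alpha> \<beta> = (\<Sum>\<omega>\<in>hvert k Vs. \<bar>\<alpha> \<omega>\<bar> + \<bar>\<beta> \<omega>\<bar>)"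

text \<open>The space Omega^{V_1} x ... x Omega^{V_k}; points x indexed by pairs (i,v), v in V_i.\<close>
definition hspace :: "nat \<Rightarrow> (nat \<Rightarrow> 'v set) \<Rightarrow> 'a measure \<Rightarrow> (nat \<times> 'v \<Rightarrow> 'a) measure" where
  "hspace k Vs M = PiM (SIGMA i:{..<k}. Vs i) (\<lambda>_. M)"

definition hdom :: "nat \<Rightarrow> 'a measure \<Rightarrow> (nat \<Rightarrow> 'a) measure" where
  "hdom k M = PiM {..<k} (\<lambda>_. M)"

definition hproj :: "nat \<Rightarrow> (nat \<Rightarrow> 'v) \<Rightarrow> (nat \<times> 'v \<Rightarrow> 'a) \<Rightarrow> (nat \<Rightarrow> 'a)" where
  "hproj k \<omega> x = (\<lambda>i\<in>{..<k}. x (i, \<omega> i))"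

definition fH :: "nat \<Rightarrow> (nat \<Rightarrow> 'v set) \<Rightarrow> ((nat \<Rightarrow> 'v) \<Rightarrow> real) \<Rightarrow> ((nat \<Rightarrow> 'v) \<Rightarrow> real)
    \<Rightarrow> ((nat \<Rightarrow> 'a) \<Rightarrow> complex) \<Rightarrow> (nat \<times> 'v \<Rightarrow> 'a) \<Rightarrow> complex" where
  "fH k Vs \<alpha> \<beta> f x = (\<Prod>\<omega>\<in>hvert k Vs.
      hpow (f (hproj k \<omega> x)) (\<alpha> \<omega>) * cnj (hpow (f (hproj k \<omega> x)) (\<beta> \<omega>)))"

definition LH :: "nat \<Rightarrow> (nat \<Rightarrow> 'v set) \<Rightarrow> ((nat \<Rightarrow> 'v) \<Rightarrow> real) \<Rightarrow> ((nat \<Rightarrow> 'v) \<Rightarrow> real)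
    \<Rightarrow> 'a measure \<Rightarrow> ((nat \<Rightarrow> 'a) \<Rightarrow> complex) set" where
  "LH k Vs \<alpha> \<beta> M = {f \<in> borel_measurable (hdom k M).
      (\<integral>\<^sup>+ x. ennreal (cmod (fH k Vs \<alpha> \<beta> (\<lambda>y. complex_of_real (cmod (f y))) x)) \<partial>hspace k Vs M) < \<infinity>}"

text \<open>||f||_H = (integral of f^H)^(1/|H|) (the integral being a nonnegative real).\<close>
definition hnorm :: "nat \<Rightarrow> (nat \<Rightarrow> 'v set) \<Rightarrow> ((nat \<Rightarrow> 'v) \<Rightarrow> real) \<Rightarrow> ((nat \<Rightarrow> 'v) \<Rightarrow> real)
    \<Rightarrow> 'a measure \<Rightarrow> ((nat \<Rightarrow> 'a) \<Rightarrow> complex) \<Rightarrow> real" where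
  "hnorm k Vs \<alpha> \<beta> M f =
     (Re (\<integral>x. fH k Vs \<alpha> \<beta> f x \<partial>hspace k Vs M)) powr (1 / hsize k Vs \<alpha> \<beta>)"

definition semi_norming_on :: "nat \<Rightarrow> (nat \<Rightarrow> 'v set) \<Rightarrow> ((nat \<Rightarrow> 'v) \<Rightarrow> real)
    \<Rightarrow> ((nat \<Rightarrow> 'v) \<Rightarrow> real) \<Rightarrow> 'a measure \<Rightarrow> bool" where
  "semi_norming_on k Vs \<alpha> \<beta> M \<longleftrightarrow>
     (\<forall>f\<in>LH k Vs \<alpha> \<beta> M.
        Im (\<integral>x. fH k Vs \<alpha> \<beta> f x \<partial>hspace k Vs M) = 0 \<and>
        Re (\<integral>x. fH k Vs \<alpha> \<beta> f x \<partial>hspace k Vs M) \<ge> 0 \<and>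
        (\<forall>c::complex. (\<lambda>y. c * f y) \<in> LH k Vs \<alpha> \<beta> M \<and>
           hnorm k Vs \<alpha> \<beta> M (\<lambda>y. c * f y) = cmod c * hnorm k Vs \<alpha> \<beta> M f) \<and>
        (\<forall>g\<in>LH k Vs \<alpha> \<beta> M. (\<lambda>y. f y + g y) \<in> LH k Vs \<alpha> \<beta> M \<and>
           hnorm k Vs \<alpha> \<beta> M (\<lambda>y. f y + g y) \<le> hnorm k Vs \<alpha> \<beta> M f + hnorm k Vs \<alpha> \<beta> M g))"

definition semi_norming :: "nat \<Rightarrow> (nat \<Rightarrow> 'v set) \<Rightarrow> ((nat \<Rightarrow> 'v) \<Rightarrow> real)
    \<Rightarrow> ((nat \<Rightarrow> 'v) \<Rightarrow> real) \<Rightarrow> bool" where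
  "semi_norming k Vs \<alpha> \<beta> \<longleftrightarrow>
     (\<forall>\<omega>\<in>hvert k Vs. \<alpha> \<omega> \<ge> 0 \<and> \<beta> \<omega> \<ge> 0) \<and>
     (\<forall>M :: real measure. semi_norming_on k Vs \<alpha> \<beta> M)"

end

theory Submission
  imports Defs
begin

lemma key:
  fixes A p s C :: real
  assumes A: "A > 0" and p: "p > 0" and s: "0 < s" "s < 1"
    and H: "\<And>t. 0 < t \<Longrightarrow> t \<le> 1 \<Longrightarrow> (A + t powr s) powr p \<le> A powr p + C * t"
  shows False
proof -
  define \<kappa> where "\<kappa> = p * A powr (p - 1)"
  have ev0: "eventually (\<lambda>t::real. 0 \<le> t) (at_right 0)"
    using eventually_at_right_less[of "0::real"] by (rule eventually_mono) simp
  have kpos: "\<kappa> > 0" using A p by (simp add: \<kappa>_def)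
  have d0: "((\<lambda>z. z powr p) has_real_derivative \<kappa>) (at (0 + A))"
    using has_real_derivative_powr[OF A] by (simp add: \<kappa>_def)
  have d: "((\<lambda>u. (u + A) powr p) has_real_derivative \<kappa>) (at 0)"
    using DERIV_shift[THEN iffD1, OF d0] .
  have lim: "((\<lambda>h. ((h + A) powr p - A powr p) / h) \<longlongrightarrow> \<kappa>) (at 0)"
    using d unfolding DERIV_def by simp
  hence lim': "((\<lambda>h. ((h + A) powr p - A powr p) / h) \<longlongrightarrow> \<kappa>) (at_right 0)"
    by (rule tendsto_mono[rotated]) (simp add: at_within_le_at)
  have E1: "eventually (\<lambda>h. ((h + A) powr p - A powr p) / h > \<kappa>/2) (at_right 0)"
    using order_tendstoD(1)[OF lim', of "\<kappa>/2"] kpos by simp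
  have fl: "filterlim (\<lambda>t. t powr s) (at_right 0) (at_right (0::real))"
  proof -
    have "((\<lambda>t. t powr s) \<longlongrightarrow> 0) (at_right (0::real))"
      by (rule tendsto_zero_powrI[OF tendsto_ident_at tendsto_const]) (use s ev0 in auto)
    moreover have "eventually (\<lambda>t. t powr s \<in> {0<..}) (at_right (0::real))"
      unfolding eventually_at_right_field by (rule exI[of _ 1]) simp
    ultimately show ?thesis by (simp add: filterlim_at)
  qed
  have E1': "eventually (\<lambda>t. ((t powr s + A) powr p - A powr p) / t powr s > \<kappa>/2) (at_right 0)"
    using filterlim_iff[THEN iffD1, OF fl] E1 by blast
  have E2: "eventually (\<lambda>t. C * t powr (1 - s) < \<kappa>/2) (at_right 0)"
  proof -
    have "((\<lambda>t. t powr (1 - s)) \<longlongrightarrow> 0) (at_right (0::real))"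
      by (rule tendsto_zero_powrI[OF tendsto_ident_at tendsto_const]) (use s ev0 in auto)
    hence "((\<lambda>t. C * t powr (1 - s)) \<longlongrightarrow> C * 0) (at_right (0::real))"
      by (intro tendsto_mult tendsto_const)
    then show ?thesis using kpos s by (intro order_tendstoD(2)) auto
  qed
  have E3: "eventually (\<lambda>t::real. 0 < t \<and> t \<le> 1) (at_right 0)"
    unfolding eventually_at_right_field by (rule exI[of _ 1]) simp
  obtain t where t1: "((t powr s + A) powr p - A powr p) / t powr s > \<kappa>/2"
    and t2: "C * t powr (1 - s) < \<kappa>/2" and t3: "0 < t" "t \<le> 1"
    using eventually_happens'[OF _ eventually_conj[OF E1' eventually_conj[OF E2 E3]]] by auto
  have up: "t powr s > 0" using t3 by simp
  have a: "(t powr s + A) powr p - A powr p > \<kappa>/2 * t powr s"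
    using t1 up by (simp add: field_simps)
  have b: "(t powr s + A) powr p - A powr p \<le> C * t"
    using H[OF t3] by (simp add: add.commute)
  have "C * t = (C * t powr (1 - s)) * t powr s"
    using t3 by (simp add: mult.assoc powr_add[symmetric])
  also have "\<dots> < \<kappa>/2 * t powr s" using t2 up by simp
  finally show False using a b by simp
qed


definition rp :: "real \<Rightarrow> real \<Rightarrow> real" where
  "rp r a = (if a = 0 then 1 else r powr a)"

lemma rp_nonneg: "0 \<le> rp r a"
  by (simp add: rp_def)

lemma rp_mono0: "0 < t \<Longrightarrow> rp 0 a \<le> rp t a"
  by (simp add: rp_def)

lemma rp_one: "rp 1 a = 1"
  by (simp add: rp_def)

lemma rp_pos: "0 < t \<Longrightarrow> rp t a = t powr a"
  by (simp add: rp_def)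

lemma hpow_real: "0 \<le> r \<Longrightarrow> hpow (complex_of_real r) a = complex_of_real (rp r a)"
  by (simp add: hpow_def rp_def powr_of_real)

lemma fH_real:
  assumes "\<And>y. 0 \<le> F y"
  shows "fH k Vs \<alpha> \<beta> (\<lambda>y. complex_of_real (F y)) x =
    complex_of_real (\<Prod>\<omega>\<in>hvert k Vs. rp (F (hproj k \<omega> x)) (\<alpha> \<omega>) * rp (F (hproj k \<omega> x)) (\<beta> \<omega>))"
  unfolding fH_def using assms by (simp add: hpow_real)

theorem corollary2p6:
  fixes k :: nat and Vs :: "nat \<Rightarrow> 'v set" and \<alpha> \<beta> :: "(nat \<Rightarrow> 'v) \<Rightarrow> real"
    and \<omega> :: "nat \<Rightarrow> 'v"
  assumes "k \<ge> 1"
    and "\<forall>i<k. finite (Vs i) \<and> Vs i \<noteq> {}"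
    and "semi_norming k Vs \<alpha> \<beta>"
    and "\<omega> \<in> hvert k Vs"
    and "\<alpha> \<omega> \<noteq> 0 \<or> \<beta> \<omega> \<noteq> 0"
  shows "\<alpha> \<omega> + \<beta> \<omega> \<ge> 1"
proof (rule ccontr)
  assume contra: "\<not> \<alpha> \<omega> + \<beta> \<omega> \<ge> 1"
  define M where "M = count_space {0, 1::real}"
  define I where "I = (SIGMA i:{..<k}. Vs i)"
  define X where "X = PiE I (\<lambda>_. {0, 1::real})"
  define D where "D = hsize k Vs \<alpha> \<beta>"
  define s where "s = \<alpha> \<omega> + \<beta> \<omega>"
  have nonneg: "\<And>w. w \<in> hvert k Vs \<Longrightarrow> 0 \<le> \<alpha> w \<and> 0 \<le> \<beta> w"
    using assms(3) unfolding semi_norming_def by blast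
  have SN: "semi_norming_on k Vs \<alpha> \<beta> M"
    using assms(3) unfolding semi_norming_def by blast
  have finI: "finite I" unfolding I_def using assms(2) by (intro finite_SigmaI) auto
  have finX: "finite X" unfolding X_def using finI by (intro finite_PiE) auto
  have finV: "finite (hvert k Vs)" unfolding hvert_def using assms(2) by (intro finite_PiE) auto
  have hsp: "hspace k Vs M = count_space X"
    unfolding hspace_def M_def X_def I_def using finI[unfolded I_def]
    by (intro count_space_PiM_finite) auto
  have hdm: "hdom k M = count_space (PiE {..<k} (\<lambda>_. {0, 1::real}))"
    unfolding hdom_def M_def by (intro count_space_PiM_finite) auto
  have allLH: "f \<in> LH k Vs \<alpha> \<beta> M" for f
    unfolding LH_def hsp hdm using finX
    by (simp add: nn_integral_count_space_finite)

  define tm :: "((nat \<Rightarrow> real) \<Rightarrow> real) \<Rightarrow> (nat \<times> 'v \<Rightarrow> real) \<Rightarrow> real" where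
    "tm F x = (\<Prod>w\<in>hvert k Vs. rp (F (hproj k w x)) (\<alpha> w) * rp (F (hproj k w x)) (\<beta> w))" for F x
  define S where "S F = (\<Sum>x\<in>X. tm F x)" for F
  have hn: "hnorm k Vs \<alpha> \<beta> M (\<lambda>y. complex_of_real (F y)) = S F powr (1 / D)"
    if "\<And>y. 0 \<le> F y" for F
    unfolding hnorm_def hsp S_def D_def tm_def fH_real[OF that]
      lebesgue_integral_count_space_finite[OF finX] of_real_sum[symmetric] Re_complex_of_real ..
  define Qp where "Qp y = (\<forall>i<k. y i = (1::real))" for y
  define G where "G y = (if Qp y then 0 else (1::real))" for y
  define Hh where "Hh y = (if Qp y then 1 else (0::real))" for y
  define Ft where "Ft t y = (if Qp y then t else (1::real))" for t y
  have s_pos: "0 < s" using nonneg[OF assms(4)] assms(5) unfolding s_def by auto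
  have s_lt: "s < 1" using contra unfolding s_def by simp
  have D_pos: "0 < D"
  proof -
    have "\<bar>\<alpha> \<omega>\<bar> + \<bar>\<beta> \<omega>\<bar> \<le> D"
      unfolding D_def hsize_def using finV assms(4)
      by (intro member_le_sum) auto
    moreover have "0 < \<bar>\<alpha> \<omega>\<bar> + \<bar>\<beta> \<omega>\<bar>" using assms(5) by auto
    ultimately show ?thesis by simp
  qed

  have T1: "tm G x \<le> tm (Ft t) x" if "0 < t" for t x
    unfolding tm_def
  proof (rule prod_mono)
    fix w assume w: "w \<in> hvert k Vs"
    show "0 \<le> rp (G (hproj k w x)) (\<alpha> w) * rp (G (hproj k w x)) (\<beta> w) \<and>
          rp (G (hproj k w x)) (\<alpha> w) * rp (G (hproj k w x)) (\<beta> w)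
          \<le> rp (Ft t (hproj k w x)) (\<alpha> w) * rp (Ft t (hproj k w x)) (\<beta> w)"
      using rp_mono0[OF that] by (auto simp: G_def Ft_def rp_nonneg intro!: mult_mono)
  qed
  define z0 where "z0 = (\<lambda>_\<in>I. (0::real))"
  have z0X: "z0 \<in> X" unfolding z0_def X_def by auto
  have T2: "tm G z0 = 1"
    unfolding tm_def
  proof (rule prod.neutral, intro ballI)
    fix w assume w: "w \<in> hvert k Vs"
    have "w 0 \<in> Vs 0" using PiE_mem[OF w[unfolded hvert_def], of 0] assms(1) by simp
    hence "(0, w 0) \<in> I" using assms(1) unfolding I_def by auto
    hence "hproj k w z0 0 = 0" using assms(1) unfolding hproj_def z0_def by simp
    hence "\<not> Qp (hproj k w z0)" using assms(1) unfolding Qp_def by (metis less_le_trans less_numeral_extra(1) zero_neq_one)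
    thus "rp (G (hproj k w z0)) (\<alpha> w) * rp (G (hproj k w z0)) (\<beta> w) = 1"
      by (simp add: G_def rp_one)
  qed
  define x0 where "x0 = (\<lambda>(i,v)\<in>I. if v = \<omega> i then 1 else (0::real))"
  have x0X: "x0 \<in> X" unfolding x0_def X_def by (auto split: if_splits)
  have Qx0: "Qp (hproj k w x0) \<longleftrightarrow> w = \<omega>" if w: "w \<in> hvert k Vs" for w
  proof
    assume q: "Qp (hproj k w x0)"
    show "w = \<omega>"
    proof (rule PiE_ext)
      show "w \<in> PiE {..<k} Vs" "\<omega> \<in> PiE {..<k} Vs" using w assms(4) unfolding hvert_def by auto
      fix i assume i: "i \<in> {..<k}"
      have "(i, w i) \<in> I" using w i unfolding I_def hvert_def by auto
      thus "w i = \<omega> i" using q i unfolding Qp_def hproj_def x0_def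
        by (auto split: if_splits)
    qed
  next
    assume "w = \<omega>"
    thus "Qp (hproj k w x0)"
      using assms(4) unfolding Qp_def hproj_def x0_def I_def hvert_def by auto
  qed
  have T3: "tm (Ft t) x0 = t powr s" if t: "0 < t" for t
  proof -
    have "tm (Ft t) x0 = (\<Prod>w\<in>hvert k Vs. if w = \<omega> then t powr \<alpha> \<omega> * t powr \<beta> \<omega> else 1)"
      unfolding tm_def
      by (rule prod.cong) (use t Qx0 in \<open>auto simp: Ft_def rp_pos rp_one\<close>)
    also have "\<dots> = t powr \<alpha> \<omega> * t powr \<beta> \<omega>"
      using finV assms(4) by (simp add: prod.delta)
    finally show ?thesis unfolding s_def by (simp add: powr_add)
  qed
  have T4: "tm G x0 = 0"
    unfolding tm_def using finV assms(4) assms(5) Qx0[OF assms(4)]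
    by (intro prod_zero) (auto intro!: bexI[of _ \<omega>] simp: G_def rp_def)

  have tnn: "0 \<le> tm F x" for F x
    unfolding tm_def by (intro prod_nonneg) (auto intro!: mult_nonneg_nonneg simp: rp_nonneg)
  have SG: "1 \<le> S G"
    unfolding S_def using finX z0X tnn T2 by (metis member_le_sum)
  have SF: "S G + t powr s \<le> S (Ft t)" if t: "0 < t" for t
  proof -
    have "t powr s = tm (Ft t) x0 - tm G x0" using T3[OF t] T4 by simp
    also have "\<dots> \<le> (\<Sum>x\<in>X. tm (Ft t) x - tm G x)"
      using finX x0X T1[OF t] by (intro member_le_sum) auto
    also have "\<dots> = S (Ft t) - S G" unfolding S_def by (simp add: sum_subtractf)
    finally show ?thesis by simp
  qed
  have SNf: "hnorm k Vs \<alpha> \<beta> M (\<lambda>y. f y + g y) \<le> hnorm k Vs \<alpha> \<beta> M f + hnorm k Vs \<alpha> \<beta> M g" for f g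
    using SN allLH unfolding semi_norming_on_def by blast
  have homf: "hnorm k Vs \<alpha> \<beta> M (\<lambda>y. c * f y) = cmod c * hnorm k Vs \<alpha> \<beta> M f" for f c
    using SN allLH unfolding semi_norming_on_def by blast
  define C where "C = hnorm k Vs \<alpha> \<beta> M (\<lambda>y. complex_of_real (Hh y))"
  show False
  proof (rule key[of "S G" "1 / D" s C])
    show "0 < S G" using SG by simp
    show "0 < 1 / D" using D_pos by simp
    show "0 < s" "s < 1" by (fact s_pos, fact s_lt)
    fix t :: real assume t: "0 < t" "t \<le> 1"
    have Gnn: "\<And>y. 0 \<le> G y" and Hnn: "\<And>y. 0 \<le> Hh y" and Fnn: "\<And>y. 0 \<le> Ft t y"
      using t by (auto simp: G_def Hh_def Ft_def)
    have eq: "(\<lambda>y. complex_of_real (G y) + complex_of_real t * complex_of_real (Hh y))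
              = (\<lambda>y. complex_of_real (Ft t y))"
      by (auto simp: G_def Hh_def Ft_def)
    have tri: "hnorm k Vs \<alpha> \<beta> M (\<lambda>y. complex_of_real (G y) + complex_of_real t * complex_of_real (Hh y))
        \<le> hnorm k Vs \<alpha> \<beta> M (\<lambda>y. complex_of_real (G y))
          + hnorm k Vs \<alpha> \<beta> M (\<lambda>y. complex_of_real t * complex_of_real (Hh y))"
      using SNf[of "\<lambda>y. complex_of_real (G y)" "\<lambda>y. complex_of_real t * complex_of_real (Hh y)"] by simp
    have hom: "hnorm k Vs \<alpha> \<beta> M (\<lambda>y. complex_of_real t * complex_of_real (Hh y))
        = cmod (complex_of_real t) * C"
      unfolding C_def by (rule homf)
    have "(S G + t powr s) powr (1 / D) \<le> S (Ft t) powr (1 / D)"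
      using SF[OF t(1)] SG D_pos by (intro powr_mono2) auto
    also have "\<dots> \<le> S G powr (1 / D) + t * C"
      using tri hom t unfolding eq hn[OF Fnn] hn[OF Gnn] by simp
    finally show "(S G + t powr s) powr (1 / D) \<le> S G powr (1 / D) + C * t"
      by (simp add: mult.commute)
  qed
qed

end
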